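(* Let $t\ge 2$ and let $n$ be an integer with $2^{t-1}-1\le n\le 2^t-3$; put $i=2^t-3-n$ and $j=n-2^{t-1}+1$. Then in $\mathbb{F}_2[w_2,w_3]$: \begin{align*} w_3r_{j-2}q_i+r_{j-1}q_{i+1}&=q_{n-2},\\ r_jq_i+w_3r_{j-1}q_{i-1}&=q_{n-1},\\ r_jq_{i+1}+w_3^2r_{j-2}q_{i-1}&=q_n. \end{align*}
   Context: In $\mathbb{F}_2[w_2,w_3]$: $q_0=1$, $q_m=0$ for $m<0$, $q_m=w_2q_{m-2}+w_3q_{m-3}$ for $m\ge1$; $r_0=1$, $r_m=0$ for $m<0$, $r_{m+1}=w_2r_m+w_3^2r_{m-2}$ for $m\ge0$. *)

theory Defs
  imports "HOL-Library.Z2" "HOL-Computational_Algebra.Polynomial"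
begin

text \<open>F_2[w2,w3] is modelled as (F_2[w2])[w3], i.e. bit poly poly:
  the inner variable is w2, the outer variable is w3.\<close>

type_synonym F2poly2 = "bit poly poly"

definition w2 :: F2poly2 where "w2 = [:[:0, 1:]:]"
definition w3 :: F2poly2 where "w3 = [:0, 1:]"

function q :: "int \<Rightarrow> F2poly2" where
  "q m = (if m < 0 then 0 else if m = 0 then 1
          else w2 * q (m - 2) + w3 * q (m - 3))"
  by pat_completeness auto
termination by (relation "measure (\<lambda>m. nat (m + 3))") auto

function r :: "int \<Rightarrow> F2poly2" where
  "r m = (if m < 0 then 0 else if m = 0 then 1
          else w2 * r (m - 1) + w3\<^sup>2 * r (m - 3))"
  by pat_completeness auto
termination by (relation "measure (\<lambda>m. nat (m + 3))") auto

declare q.simps[simp del] r.simps[simp del]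

end

theory Submission
  imports Defs
begin

lemma two0: "(2::F2poly2) = 0"
proof -
  have b: "(of_nat 2::bit) = 0" by simp
  have c: "(of_nat 2::bit poly) = 0" by (simp only: of_nat_poly b) simp
  have "(2::F2poly2) = of_nat 2" by simp
  also have "\<dots> = [:of_nat 2:]" by (rule of_nat_poly)
  also have "\<dots> = 0" using c by simp
  finally show ?thesis .
qed

lemma c2: "a + 2*W = b \<Longrightarrow> a = (b::F2poly2)"
  by (simp add: two0)

lemma c3: "a = b + 2*W \<Longrightarrow> a = (b::F2poly2)"
  by (simp add: two0)

lemma q_neg: "m < 0 \<Longrightarrow> q m = 0" by (subst q.simps) simp
lemma q_0: "q 0 = 1" by (subst q.simps) simp
lemma q_rec: "m \<ge> 1 \<Longrightarrow> q m = w2 * q (m-2) + w3 * q (m-3)" by (subst q.simps) simp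
lemma r_neg: "m < 0 \<Longrightarrow> r m = 0" by (subst r.simps) simp
lemma r_0: "r 0 = 1" by (subst r.simps) simp
lemma r_rec: "m \<ge> 1 \<Longrightarrow> r m = w2 * r (m-1) + w3^2 * r (m-3)" by (subst r.simps) simp

definition P :: "int \<Rightarrow> bool" where
  "P k \<longleftrightarrow> q (2*k) = q k ^ 2 + w2 * q (k-1) ^ 2 \<and> q (2*k+1) = w3 * q (k-1) ^ 2"

lemma P_neg: "k < 0 \<Longrightarrow> P k"
  unfolding P_def by (simp add: q_neg)

lemma P_nat: "P (int m)"
proof (induction m rule: less_induct)
  case (less m)
  have IH: "P k" if "k < int m" for k
  proof (cases "k < 0")
    case True then show ?thesis by (rule P_neg)
  next
    case False
    then obtain m' where km: "k = int m'" by (metis not_less zero_le_imp_eq_int)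
    with that have "m' < m" by simp
    then show ?thesis using less km by simp
  qed
  show ?case
  proof (cases "m = 0")
    case True
    then show ?thesis unfolding P_def by (simp add: q_neg q_0 q_rec[of 1])
  next
    case False
    define k where "k = int m"
    have k1: "k \<ge> 1" using False k_def by simp
    have A: "P (k-1)" using IH k_def by simp
    have B: "P (k-2)" using IH k_def by simp
    have a1: "q (2*k-2) = q (k-1)^2 + w2 * q (k-2)^2" using A unfolding P_def
      by (simp add: algebra_simps)
    have a2: "q (2*k-1) = w3 * q (k-2)^2" using A unfolding P_def
      by (simp add: algebra_simps)
    have b2: "q (2*k-3) = w3 * q (k-3)^2" using B unfolding P_def
      by (simp add: algebra_simps)
    have e1: "q (2*k) = w2 * q (2*k-2) + w3 * q (2*k-3)" using q_rec[of "2*k"] k1 by simp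
    have e2: "q (2*k+1) = w2 * q (2*k-1) + w3 * q (2*k-2)" using q_rec[of "2*k+1"] k1 by simp
    have e3: "q k = w2 * q (k-2) + w3 * q (k-3)" using q_rec[of k] k1 by simp
    have "q (2*k) = q k ^ 2 + w2 * q (k-1) ^ 2"
      unfolding e1 e3 a1 b2 by (rule c2[where W="w2*w3*q(k-2)*q(k-3)"]) algebra
    moreover have "q (2*k+1) = w3 * q (k-1) ^ 2"
      by (rule c3[where W="w2*w3*q(k-2)^2"], unfold e2 a1 a2) algebra
    ultimately show ?thesis unfolding P_def k_def by simp
  qed
qed

lemma P_all: "P k"
proof (cases "k < 0")
  case True then show ?thesis by (rule P_neg)
next
  case False
  then have "k = int (nat k)" by simp
  then show ?thesis using P_nat[of "nat k"] by simp
qed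

lemma q_pow: "q (2 ^ s - 3) = 0"
proof (induction s)
  case 0 then show ?case by (simp add: q_neg)
next
  case (Suc s)
  have "q (2 * (2^s - 2) + 1) = w3 * q (2^s - 3) ^ 2"
    using P_all[of "2^s - 2"] unfolding P_def by (simp add: algebra_simps)
  moreover have "(2 * (2^s - 2) + 1 :: int) = 2 ^ Suc s - 3" by simp
  ultimately show ?case using Suc by simp
qed

lemma ids:
  fixes K :: int and j :: nat
  assumes "q (K - 1) = 0" and "int j \<le> K"
  shows "w3 * r (int j - 2) * q (K - int j) + r (int j - 1) * q (K - int j + 1) = q (K + int j - 1) \<and>
         r (int j) * q (K - int j) + w3 * r (int j - 1) * q (K - int j - 1) = q (K + int j) \<and>
         r (int j) * q (K - int j + 1) + w3\<^sup>2 * r (int j - 2) * q (K - int j - 1) = q (K + int j + 1)"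
  using assms(2)
proof (induction j)
  case 0
  then show ?case using assms(1) by (simp add: r_neg r_0)
next
  case (Suc j)
  define J where "J = int j"
  define I where "I = K - int j"
  have I1: "I \<ge> 1" using Suc.prems I_def by simp
  have IH: "w3 * r (J - 2) * q I + r (J - 1) * q (I + 1) = q (K + J - 1)"
           "r J * q I + w3 * r (J - 1) * q (I - 1) = q (K + J)"
           "r J * q (I + 1) + w3\<^sup>2 * r (J - 2) * q (I - 1) = q (K + J + 1)"
    using Suc by (auto simp: J_def I_def)
  have rr: "r (J + 1) = w2 * r J + w3^2 * r (J - 2)" using r_rec[of "J+1"] J_def by simp
  have qi: "q (I + 1) = w2 * q (I - 1) + w3 * q (I - 2)" using r_rec q_rec[of "I+1"] I1 by simp
  have qn: "q (K + J + 2) = w2 * q (K + J) + w3 * q (K + J - 1)"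
    using q_rec[of "K+J+2"] I1 I_def J_def by simp
  have g1: "w3 * r (J - 1) * q (I - 1) + r J * q I = q (K + J)" using IH(2) by (simp add: algebra_simps)
  have g2: "r (J+1) * q (I - 1) + w3 * r J * q (I - 2) = q (K + J + 1)"
    unfolding rr IH(3)[symmetric] qi by algebra
  have g3: "r (J+1) * q I + w3\<^sup>2 * r (J - 1) * q (I - 2) = q (K + J + 2)"
    by (rule c2[where W="w2*w3*r(J-1)*q(I-1)"], unfold rr qn IH(1)[symmetric] IH(2)[symmetric] qi) algebra
  show ?case using g1 g2 g3 unfolding J_def I_def by (simp add: algebra_simps)
qed

theorem mainTheorem15:
  fixes t :: nat and n i j :: int
  assumes "t \<ge> 2"
    and "2 ^ (t - 1) - 1 \<le> n" and "n \<le> 2 ^ t - 3"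
    and "i = 2 ^ t - 3 - n" and "j = n - 2 ^ (t - 1) + 1"
  shows "w3 * r (j - 2) * q i + r (j - 1) * q (i + 1) = q (n - 2) \<and>
         r j * q i + w3 * r (j - 1) * q (i - 1) = q (n - 1) \<and>
         r j * q (i + 1) + w3\<^sup>2 * r (j - 2) * q (i - 1) = q n"
proof -
  define N :: int where "N = 2 ^ (t - 1)"
  have t2: "(2::int) ^ t = 2 * N" unfolding N_def using assms(1)
    by (metis Suc_diff_1 less_le_trans pos2 power_Suc zero_less_numeral) 
  define K where "K = N - 2"
  have j0: "j \<ge> 0" using assms N_def by simp
  have iK: "i = K - j" "n = K + j + 1" using assms t2 unfolding K_def N_def by auto
  have qK: "q (K - 1) = 0" using q_pow[of "t-1"] unfolding K_def N_def by simp
  have jK: "int (nat j) \<le> K" using assms t2 j0 unfolding K_def N_def by auto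
  have jj: "int (nat j) = j" using j0 by simp
  show ?thesis unfolding iK using ids[OF qK jK, unfolded jj] by (simp add: algebra_simps)
qed

end
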